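(* The function $f(A)=h(A)+c(A)$ on $2^V$ is non-decreasing and $\varepsilon$-approximately $\mathcal{C}$-submodular with $\varepsilon=1/L$, where $\mathcal{C}$ is the collection of all subsets $B\subseteq V$ inducing a connected subgraph; that is, for every $A\subseteq V$, every $B\in\mathcal{C}$ and every $x\in V\setminus B$, $$f(A\cup B\cup\{x\})-f(A\cup B)\le f(A\cup\{x\})-f(A)+\frac1L .$$
   Context: $G=(V,E,w)$ is a finite simple undirected graph with positive rational edge weights and no isolated vertices. $N_A(v)=N(v)\cap A$, $W_A(v)=\sum_{u\in N_A(v)}w_{(v,u)}$, $W(v)=W_V(v)$. $h(A)=\sum_{v\in V}h_A(v)$ with $h_A(v)=W(v)/2$ if $v\in A$ or $W_A(v)\ge W(v)/2$, and $h_A(v)=W_A(v)$ otherwise. $L=\max_v l(v)$, where $l(v)$ is the lcm of the denominators of the reduced fractions $W(v)/2$ and of the weights of edges incident to $v$. $p(A)$ is the number of connected components of the induced subgraph $G[A]$ ($p(\emptyset)=0$), $q(A)$ is the number of connected components of the spanning subgraph $(V,\{e\in E: e \text{ has at least one endpoint in } A\})$, and $c(A)=\frac1L\big(|V|-q(A)-p(A)\big)$. *)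

theory Defs
  imports Complex_Main
begin

text \<open>A finite simple undirected weighted graph: vertex set V, edges E as 2-element subsets
of V, weight function w on edges (only its values on E matter).\<close>

definition wgraph :: "'a set \<Rightarrow> 'a set set \<Rightarrow> ('a set \<Rightarrow> rat) \<Rightarrow> bool" where
  "wgraph V E w \<longleftrightarrow> finite V \<and> (\<forall>e\<in>E. e \<subseteq> V \<and> card e = 2) \<and>
     (\<forall>e\<in>E. w e > 0) \<and> (\<forall>v\<in>V. \<exists>e\<in>E. v \<in> e)"

definition nbr :: "'a set set \<Rightarrow> 'a set \<Rightarrow> 'a \<Rightarrow> 'a set" where
  "nbr E A v = {u \<in> A. {v, u} \<in> E}"

definition WA :: "'a set set \<Rightarrow> ('a set \<Rightarrow> rat) \<Rightarrow> 'a set \<Rightarrow> 'a \<Rightarrow> rat" where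
  "WA E w A v = (\<Sum>u\<in>nbr E A v. w {v, u})"

definition hv :: "'a set \<Rightarrow> 'a set set \<Rightarrow> ('a set \<Rightarrow> rat) \<Rightarrow> 'a set \<Rightarrow> 'a \<Rightarrow> rat" where
  "hv V E w A v = (if v \<in> A \<or> WA E w A v \<ge> WA E w V v / 2 then WA E w V v / 2 else WA E w A v)"

definition hfun :: "'a set \<Rightarrow> 'a set set \<Rightarrow> ('a set \<Rightarrow> rat) \<Rightarrow> 'a set \<Rightarrow> rat" where
  "hfun V E w A = (\<Sum>v\<in>V. hv V E w A v)"

definition denom :: "rat \<Rightarrow> int" where
  "denom q = snd (quotient_of q)"

definition lv :: "'a set \<Rightarrow> 'a set set \<Rightarrow> ('a set \<Rightarrow> rat) \<Rightarrow> 'a \<Rightarrow> int" where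
  "lv V E w v = Lcm ({denom (WA E w V v / 2)} \<union> {denom (w e) | e. e \<in> E \<and> v \<in> e})"

definition Lval :: "'a set \<Rightarrow> 'a set set \<Rightarrow> ('a set \<Rightarrow> rat) \<Rightarrow> int" where
  "Lval V E w = Max (lv V E w ` V)"

text \<open>Number of connected components of the graph with vertex set S and edge set F
(edges of F not contained in S are ignored).\<close>
definition ncomp :: "'a set \<Rightarrow> 'a set set \<Rightarrow> nat" where
  "ncomp S F = card (S // ({(u, v). u \<in> S \<and> v \<in> S \<and> {u, v} \<in> F}\<^sup>*))"

definition pfun :: "'a set set \<Rightarrow> 'a set \<Rightarrow> nat" where
  "pfun E A = ncomp A {e \<in> E. e \<subseteq> A}"

definition qfun :: "'a set \<Rightarrow> 'a set set \<Rightarrow> 'a set \<Rightarrow> nat" where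
  "qfun V E A = ncomp V {e \<in> E. e \<inter> A \<noteq> {}}"

definition cfun :: "'a set \<Rightarrow> 'a set set \<Rightarrow> ('a set \<Rightarrow> rat) \<Rightarrow> 'a set \<Rightarrow> rat" where
  "cfun V E w A = (of_nat (card V) - of_nat (qfun V E A) - of_nat (pfun E A)) / of_int (Lval V E w)"

definition ffun :: "'a set \<Rightarrow> 'a set set \<Rightarrow> ('a set \<Rightarrow> rat) \<Rightarrow> 'a set \<Rightarrow> rat" where
  "ffun V E w A = hfun V E w A + cfun V E w A"

text \<open>B induces a connected subgraph (connected graphs are nonempty).\<close>
definition connected_set :: "'a set set \<Rightarrow> 'a set \<Rightarrow> bool" where
  "connected_set E B \<longleftrightarrow> pfun E B = 1"

end

theory Submission
  imports Defs
begin


definition rl :: "'a set \<Rightarrow> 'a set set \<Rightarrow> ('a \<times> 'a) set" where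
  "rl U F = {(u, v). u \<in> U \<and> v \<in> U \<and> {u, v} \<in> F}"

definition sp :: "'a \<Rightarrow> 'a set \<Rightarrow> ('a \<times> 'a) set" where
  "sp x Y = {(x, y) | y. y \<in> Y} \<union> {(y, x) | y. y \<in> Y}"

lemma ncomp_rl: "ncomp U F = card (U // (rl U F)\<^sup>*)"
  by (simp add: ncomp_def rl_def)

lemma sym_rl: "sym (rl U F)"
  unfolding rl_def sym_def by (auto simp: insert_commute)

lemma rl_sub: "rl U F \<subseteq> U \<times> U"
  unfolding rl_def by auto

lemma rtrancl_closed:
  assumes "R \<subseteq> U \<times> U" "u \<in> U" "(u, v) \<in> R\<^sup>*"
  shows "v \<in> U"
  using assms(3,2) by (induction rule: rtrancl_induct) (use assms(1) in auto)

lemma rtrancl_nodom: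
  assumes "x \<notin> Domain R"
  shows "R\<^sup>* `` {x} = {x}"
proof -
  have "v = x" if "(x, v) \<in> R\<^sup>*" for v
    using that by (cases rule: converse_rtranclE) (use assms in auto)
  then show ?thesis by auto
qed

lemma star_rtrancl:
  assumes "sym R"
  shows "(R \<union> sp x Y)\<^sup>* = R\<^sup>* \<union> {(a, b). \<exists>z1\<in>insert x Y. \<exists>z2\<in>insert x Y. (a, z1) \<in> R\<^sup>* \<and> (z2, b) \<in> R\<^sup>*}"
    (is "?L = ?R")
proof
  have tr: "trans ?R"
  proof (rule transI)
    fix a b c assume ab: "(a, b) \<in> ?R" and bc: "(b, c) \<in> ?R"
    then show "(a, c) \<in> ?R"
      by (auto intro: rtrancl_trans)
  qed
  have rf: "(a, a) \<in> ?R" for a by auto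
  have sub: "R \<union> sp x Y \<subseteq> ?R"
    unfolding sp_def by auto
  show "?L \<subseteq> ?R"
  proof
    fix p assume "p \<in> ?L"
    then obtain a b where p: "p = (a, b)" and ab: "(a, b) \<in> ?L" by (cases p) auto
    from ab have "(a, b) \<in> ?R"
    proof (induction rule: rtrancl_induct)
      case base then show ?case by (rule rf)
    next
      case (step y z)
      then show ?case using sub tr by (meson subsetD transD)
    qed
    then show "p \<in> ?R" using p by simp
  qed
next
  have RL: "R\<^sup>* \<subseteq> ?L" by (simp add: rtrancl_mono)
  have zx: "(z, x) \<in> ?L" "(x, z) \<in> ?L" if "z \<in> insert x Y" for z
    using that unfolding sp_def by auto
  show "?R \<subseteq> ?L"
  proof
    fix p assume "p \<in> ?R"
    then obtain a b where p: "p = (a, b)" and ab: "(a, b) \<in> ?R" by (cases p) auto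
    show "p \<in> ?L"
    proof (cases "(a, b) \<in> R\<^sup>*")
      case True then show ?thesis using RL p by auto
    next
      case False
      then obtain z1 z2 where z: "z1 \<in> insert x Y" "z2 \<in> insert x Y" "(a, z1) \<in> R\<^sup>*" "(z2, b) \<in> R\<^sup>*"
        using ab by auto
      have "(a, z1) \<in> ?L" "(z2, b) \<in> ?L" using z RL by auto
      moreover have "(z1, z2) \<in> ?L" using zx z by (meson rtrancl_trans)
      ultimately show ?thesis using p by (meson rtrancl_trans)
    qed
  qed
qed

lemma merge:
  assumes fin: "finite U" and Z: "Z \<subseteq> U" "x \<in> Z"
    and e: "refl e" "sym e" "trans e"
    and cl: "\<forall>u\<in>U. e `` {u} \<subseteq> U"
  shows "card (U // (e \<union> {(a, b). \<exists>z1\<in>Z. \<exists>z2\<in>Z. (a, z1) \<in> e \<and> (z2, b) \<in> e}))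
          + card {C \<in> U // e. C \<inter> Z \<noteq> {}} = card (U // e) + 1"
proof -
  define e' where "e' = e \<union> {(a, b). \<exists>z1\<in>Z. \<exists>z2\<in>Z. (a, z1) \<in> e \<and> (z2, b) \<in> e}"
  define M where "M = e `` Z"
  have ee: "(a, a) \<in> e" for a using e(1) by (simp add: refl_on_def)
  have es: "(a, b) \<in> e \<Longrightarrow> (b, a) \<in> e" for a b using e(2) by (simp add: sym_def)
  have et: "(a, b) \<in> e \<Longrightarrow> (b, c) \<in> e \<Longrightarrow> (a, c) \<in> e" for a b c using e(3) by (meson transD)
  have c1: "e' `` {u} = e `` {u}" if "e `` {u} \<inter> Z = {}" for u
    using that unfolding e'_def by auto
  have c2: "e' `` {u} = M" if "e `` {u} \<inter> Z \<noteq> {}" for u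
  proof -
    from that obtain z where z: "z \<in> Z" "(u, z) \<in> e" by auto
    show ?thesis
    proof
      show "e' `` {u} \<subseteq> M"
      proof
        fix b assume "b \<in> e' `` {u}"
        then have "(u, b) \<in> e \<or> (\<exists>z2\<in>Z. (z2, b) \<in> e)" unfolding e'_def by auto
        then show "b \<in> M" unfolding M_def using z es et by blast
      qed
      show "M \<subseteq> e' `` {u}" unfolding M_def e'_def using z by auto
    qed
  qed
  have Q: "U // e' = {C \<in> U // e. C \<inter> Z = {}} \<union> {M}"
  proof
    show "U // e' \<subseteq> {C \<in> U // e. C \<inter> Z = {}} \<union> {M}"
    proof
      fix C assume "C \<in> U // e'"
      then obtain u where u: "u \<in> U" "C = e' `` {u}" by (auto elim: quotientE)
      show "C \<in> {C \<in> U // e. C \<inter> Z = {}} \<union> {M}"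
      proof (cases "e `` {u} \<inter> Z = {}")
        case True then show ?thesis using c1 u by (auto intro: quotientI)
      next
        case False then show ?thesis using c2 u by auto
      qed
    qed
    have "e `` {x} \<inter> Z \<noteq> {}" using Z ee by auto
    then have "M \<in> U // e'" using c2[of x] Z by (metis quotientI subsetD)
    moreover have "C \<in> U // e'" if "C \<in> U // e" "C \<inter> Z = {}" for C
    proof -
      from that obtain u where u: "u \<in> U" "C = e `` {u}" by (auto elim: quotientE)
      then show ?thesis using c1 that by (metis quotientI)
    qed
    ultimately show "{C \<in> U // e. C \<inter> Z = {}} \<union> {M} \<subseteq> U // e'" by auto
  qed
  have finQ: "finite (U // e)" proof -
    have "U // e = (\<lambda>u. e `` {u}) ` U" by (auto simp: quotient_def)
    then show ?thesis using fin by simp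
  qed
  have MZ: "M \<inter> Z \<noteq> {}" unfolding M_def using Z ee by auto
  have "card (U // e') = card {C \<in> U // e. C \<inter> Z = {}} + 1"
    unfolding Q using finQ MZ by (subst card_Un_disjoint) auto
  moreover have "card (U // e) = card {C \<in> U // e. C \<inter> Z = {}} + card {C \<in> U // e. C \<inter> Z \<noteq> {}}"
  proof -
    have "U // e = {C \<in> U // e. C \<inter> Z = {}} \<union> {C \<in> U // e. C \<inter> Z \<noteq> {}}" by auto
    then show ?thesis using finQ by (metis (no_types, lifting) card_Un_disjoint disjoint_iff finite_Un mem_Collect_eq)
  qed
  ultimately show ?thesis unfolding e'_def by simp
qed

lemma quot_img: "U // e = (\<lambda>u. e `` {u}) ` U"
  by (auto simp: quotient_def)

lemma merge_rl:
  assumes "finite U" "sym R" "R \<subseteq> U \<times> U" "x \<in> U" "Y \<subseteq> U"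
  shows "card (U // (R \<union> sp x Y)\<^sup>*) + card {C \<in> U // R\<^sup>*. C \<inter> insert x Y \<noteq> {}}
           = card (U // R\<^sup>*) + 1"
proof -
  have cl: "\<forall>u\<in>U. R\<^sup>* `` {u} \<subseteq> U" using rtrancl_closed[OF assms(3)] by auto
  show ?thesis
    unfolding star_rtrancl[OF assms(2)]
    using merge[of U "insert x Y" x "R\<^sup>*"] assms cl
    by (simp add: refl_rtrancl sym_rtrancl trans_rtrancl)
qed

lemma refine:
  assumes "R \<subseteq> R'" "sym R'" "Z \<subseteq> U" "finite U"
  shows "card {C \<in> U // R'\<^sup>*. C \<inter> Z \<noteq> {}} \<le> card {C \<in> U // R\<^sup>*. C \<inter> Z \<noteq> {}}"
proof -
  have "{C \<in> U // R'\<^sup>*. C \<inter> Z \<noteq> {}} \<subseteq> (\<lambda>C. R'\<^sup>* `` C) ` {C \<in> U // R\<^sup>*. C \<inter> Z \<noteq> {}}"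
  proof
    fix C assume "C \<in> {C \<in> U // R'\<^sup>*. C \<inter> Z \<noteq> {}}"
    then obtain u z where u: "u \<in> U" "C = R'\<^sup>* `` {u}" "z \<in> Z" "(u, z) \<in> R'\<^sup>*"
      by (auto elim!: quotientE)
    have zU: "z \<in> U" using u assms(3) by auto
    have "R'\<^sup>* `` (R\<^sup>* `` {z}) = R'\<^sup>* `` {z}"
    proof
      show "R'\<^sup>* `` (R\<^sup>* `` {z}) \<subseteq> R'\<^sup>* `` {z}"
        using rtrancl_mono[OF assms(1)] by (auto intro: rtrancl_trans)
      show "R'\<^sup>* `` {z} \<subseteq> R'\<^sup>* `` (R\<^sup>* `` {z})" by auto
    qed
    also have "\<dots> = C"
    proof -
      have "(z, u) \<in> R'\<^sup>*" using u(4) assms(2) by (meson symD sym_rtrancl)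
      then show ?thesis using u(2,4) by (auto intro: rtrancl_trans)
    qed
    finally have "C = R'\<^sup>* `` (R\<^sup>* `` {z})" by simp
    moreover have "R\<^sup>* `` {z} \<in> {C \<in> U // R\<^sup>*. C \<inter> Z \<noteq> {}}"
      using zU u(3) by (auto intro: quotientI)
    ultimately show "C \<in> (\<lambda>C. R'\<^sup>* `` C) ` {C \<in> U // R\<^sup>*. C \<inter> Z \<noteq> {}}" by blast
  qed
  moreover have "finite {C \<in> U // R\<^sup>*. C \<inter> Z \<noteq> {}}"
    using assms(4) by (simp add: quot_img)
  ultimately show ?thesis by (meson card_image_le card_mono finite_imageI order_trans)
qed

lemma edgeD:
  assumes "\<forall>e\<in>E. e \<subseteq> V \<and> card e = 2" "{u, v} \<in> E"
  shows "u \<noteq> v" "u \<in> V" "v \<in> V"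
  using assms by fastforce+

definition kq :: "'a set \<Rightarrow> 'a set set \<Rightarrow> 'a set \<Rightarrow> 'a \<Rightarrow> nat" where
  "kq V E S x = card {C \<in> V // (rl V {e \<in> E. e \<inter> S \<noteq> {}})\<^sup>*. C \<inter> insert x (nbr E V x) \<noteq> {}}"

definition jp :: "'a set set \<Rightarrow> 'a set \<Rightarrow> 'a \<Rightarrow> nat" where
  "jp E S x = card {C \<in> S // (rl S {e \<in> E. e \<subseteq> S})\<^sup>*. C \<inter> nbr E S x \<noteq> {}}"

lemma q_step:
  assumes G: "finite V" "\<forall>e\<in>E. e \<subseteq> V \<and> card e = 2" and x: "x \<in> V" "x \<notin> S"
  shows "qfun V E (insert x S) + kq V E S x = qfun V E S + 1"
proof -
  have eq: "rl V {e \<in> E. e \<inter> insert x S \<noteq> {}} = rl V {e \<in> E. e \<inter> S \<noteq> {}} \<union> sp x (nbr E V x)"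
    unfolding rl_def sp_def nbr_def using x by (auto simp: insert_commute)
  have "nbr E V x \<subseteq> V" unfolding nbr_def by auto
  then have M: "card (V // (rl V {e \<in> E. e \<inter> S \<noteq> {}} \<union> sp x (nbr E V x))\<^sup>*) + kq V E S x
     = card (V // (rl V {e \<in> E. e \<inter> S \<noteq> {}})\<^sup>*) + 1"
    unfolding kq_def
    using merge_rl[of V "rl V {e \<in> E. e \<inter> S \<noteq> {}}" x "nbr E V x"] G x sym_rl rl_sub
    by blast
  have "qfun V E (insert x S) = card (V // (rl V {e \<in> E. e \<inter> S \<noteq> {}} \<union> sp x (nbr E V x))\<^sup>*)"
    unfolding qfun_def ncomp_rl eq[symmetric] by (rule refl)
  moreover have "qfun V E S = card (V // (rl V {e \<in> E. e \<inter> S \<noteq> {}})\<^sup>*)"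
    unfolding qfun_def ncomp_rl by (rule refl)
  ultimately show ?thesis using M by simp
qed

lemma p_step:
  assumes G: "finite V" "\<forall>e\<in>E. e \<subseteq> V \<and> card e = 2" and x: "x \<in> V" "x \<notin> S" and S: "S \<subseteq> V"
  shows "pfun E (insert x S) + jp E S x = pfun E S + 1"
proof -
  define R where "R = rl S {e \<in> E. e \<subseteq> S}"
  define Y where "Y = nbr E S x"
  have Y: "Y \<subseteq> S" unfolding Y_def nbr_def by auto
  have R1: "rl (insert x S) {e \<in> E. e \<subseteq> insert x S} = R \<union> sp x Y"
  proof -
    have "\<And>u v. {u, v} \<in> E \<Longrightarrow> u \<noteq> v" using edgeD[OF G(2)] by blast
    then show ?thesis unfolding R_def Y_def rl_def sp_def nbr_def using x
      by (auto simp: insert_commute)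
  qed
  have RS: "R \<subseteq> S \<times> S" unfolding R_def by (rule rl_sub)
  have finS: "finite S" using S G(1) finite_subset by blast
  have M: "card (insert x S // (R \<union> sp x Y)\<^sup>*) + card {C \<in> insert x S // R\<^sup>*. C \<inter> insert x Y \<noteq> {}}
           = card (insert x S // R\<^sup>*) + 1"
    using merge_rl[of "insert x S" R x Y] finS sym_rl RS Y unfolding R_def by auto
  have xd: "x \<notin> Domain R" using RS x by auto
  have Rx: "R\<^sup>* `` {x} = {x}" by (rule rtrancl_nodom[OF xd])
  have Q1: "insert x S // R\<^sup>* = insert {x} (S // R\<^sup>*)"
    unfolding quot_img using Rx by auto
  have nx: "{x} \<notin> S // R\<^sup>*"
  proof
    assume "{x} \<in> S // R\<^sup>*"
    then obtain s where "s \<in> S" "{x} = R\<^sup>* `` {s}" by (auto elim: quotientE)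
    then show False using x by auto
  qed
  have finQ: "finite (S // R\<^sup>*)" using finS by (simp add: quot_img)
  have c1: "card (insert x S // R\<^sup>*) = card (S // R\<^sup>*) + 1"
    unfolding Q1 using nx finQ by simp
  have Q2: "{C \<in> insert x S // R\<^sup>*. C \<inter> insert x Y \<noteq> {}} = insert {x} {C \<in> S // R\<^sup>*. C \<inter> Y \<noteq> {}}"
  proof -
    have "C \<inter> insert x Y \<noteq> {} \<longleftrightarrow> C \<inter> Y \<noteq> {}" if "C \<in> S // R\<^sup>*" for C
    proof -
      have "C \<subseteq> S" using that RS rtrancl_closed[OF RS] by (auto elim!: quotientE)
      then show ?thesis using x by auto
    qed
    then show ?thesis unfolding Q1 by auto
  qed
  have c2: "card {C \<in> insert x S // R\<^sup>*. C \<inter> insert x Y \<noteq> {}} = jp E S x + 1"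
    unfolding Q2 jp_def R_def[symmetric] Y_def[symmetric] using nx finQ by simp
  have "pfun E (insert x S) = card (insert x S // (R \<union> sp x Y)\<^sup>*)"
    unfolding pfun_def ncomp_rl R1[symmetric] by (rule refl)
  moreover have "pfun E S = card (S // R\<^sup>*)"
    unfolding pfun_def ncomp_rl R_def by (rule refl)
  ultimately show ?thesis using M c1 c2 by simp
qed

lemma class_eq:
  assumes "sym R" "(u, b) \<in> R\<^sup>*"
  shows "R\<^sup>* `` {u} = R\<^sup>* `` {b}"
proof -
  have "(b, u) \<in> R\<^sup>*" using assms by (meson symD sym_rtrancl)
  then show ?thesis using assms(2) by (auto intro: rtrancl_trans)
qed

lemma kq_ge1:
  assumes "finite V" "x \<in> V"
  shows "kq V E S x \<ge> 1"
proof -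
  let ?R = "rl V {e \<in> E. e \<inter> S \<noteq> {}}"
  have "?R\<^sup>* `` {x} \<in> V // ?R\<^sup>*" using assms(2) by (rule quotientI)
  moreover have "x \<in> ?R\<^sup>* `` {x}" by simp
  ultimately have "?R\<^sup>* `` {x} \<in> {C \<in> V // ?R\<^sup>*. C \<inter> insert x (nbr E V x) \<noteq> {}}"
    by blast
  moreover have "finite {C \<in> V // ?R\<^sup>*. C \<inter> insert x (nbr E V x) \<noteq> {}}"
    using assms by (simp add: quot_img)
  ultimately have "{C \<in> V // ?R\<^sup>*. C \<inter> insert x (nbr E V x) \<noteq> {}} \<noteq> {}"
    "finite {C \<in> V // ?R\<^sup>*. C \<inter> insert x (nbr E V x) \<noteq> {}}" by blast+
  then show ?thesis unfolding kq_def
    by (simp add: Suc_leI card_gt_0_iff)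
qed

lemma kq_ge2:
  assumes G: "finite V" "\<forall>e\<in>E. e \<subseteq> V \<and> card e = 2" and x: "x \<in> V" "x \<notin> S"
    and iso: "\<exists>e\<in>E. x \<in> e" and j: "jp E S x = 0" and S: "S \<subseteq> V"
  shows "kq V E S x \<ge> 2"
proof -
  let ?R = "rl V {e \<in> E. e \<inter> S \<noteq> {}}"
  let ?RS = "rl S {e \<in> E. e \<subseteq> S}"
  have finS: "finite S" using S G(1) finite_subset by blast
  have N: "nbr E S x = {}"
  proof (rule ccontr)
    assume "nbr E S x \<noteq> {}"
    then obtain y where y: "y \<in> nbr E S x" by auto
    then have yS: "y \<in> S" unfolding nbr_def by auto
    have "?RS\<^sup>* `` {y} \<in> S // ?RS\<^sup>*" using yS by (rule quotientI)
    moreover have "y \<in> ?RS\<^sup>* `` {y}" by simp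
    ultimately have "?RS\<^sup>* `` {y} \<in> {C \<in> S // ?RS\<^sup>*. C \<inter> nbr E S x \<noteq> {}}"
      using y by blast
    moreover have "finite {C \<in> S // ?RS\<^sup>*. C \<inter> nbr E S x \<noteq> {}}"
      using finS by (simp add: quot_img)
    ultimately have "jp E S x \<noteq> 0" unfolding jp_def by (metis (no_types, lifting) card_0_eq empty_iff)
    then show False using j by simp
  qed
  have xd: "x \<notin> Domain ?R"
  proof
    assume "x \<in> Domain ?R"
    then obtain v where "(x, v) \<in> ?R" by auto
    then have "{x, v} \<in> E" "{x, v} \<inter> S \<noteq> {}" "v \<in> V" unfolding rl_def by auto
    then have "v \<in> nbr E S x" using x unfolding nbr_def by auto
    then show False using N by auto
  qed
  have Rx: "?R\<^sup>* `` {x} = {x}" by (rule rtrancl_nodom[OF xd])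
  obtain e where e: "e \<in> E" "x \<in> e" using iso by auto
  then have "card e = 2" using G(2) by blast
  then obtain a b where ab: "e = {a, b}" "a \<noteq> b" by (meson card_2_iff)
  then obtain y where y: "e = {x, y}" "y \<noteq> x" using e by auto
  have yV: "y \<in> V" using y e G(2) by auto
  have yN: "y \<in> nbr E V x" using y e yV unfolding nbr_def by auto
  let ?P = "{C \<in> V // ?R\<^sup>*. C \<inter> insert x (nbr E V x) \<noteq> {}}"
  have q1: "?R\<^sup>* `` {x} \<in> V // ?R\<^sup>*" using x(1) by (rule quotientI)
  have q2: "?R\<^sup>* `` {y} \<in> V // ?R\<^sup>*" using yV by (rule quotientI)
  have m1: "x \<in> ?R\<^sup>* `` {x}" "y \<in> ?R\<^sup>* `` {y}" by simp_all
  have "?R\<^sup>* `` {x} \<in> ?P" using q1 m1 by blast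
  moreover have "?R\<^sup>* `` {y} \<in> ?P" using q2 m1 yN by blast
  moreover have ne: "?R\<^sup>* `` {x} \<noteq> ?R\<^sup>* `` {y}" using Rx y m1 by auto
  moreover have "finite ?P" using G(1) by (simp add: quot_img)
  ultimately have "card {?R\<^sup>* `` {x}, ?R\<^sup>* `` {y}} \<le> card ?P"
    by (intro card_mono) auto
  then show ?thesis unfolding kq_def using ne by simp
qed

lemma kq_mono:
  assumes "finite V" "S \<subseteq> T" "x \<in> V"
  shows "kq V E T x \<le> kq V E S x"
  unfolding kq_def
proof (rule refine)
  show "rl V {e \<in> E. e \<inter> S \<noteq> {}} \<subseteq> rl V {e \<in> E. e \<inter> T \<noteq> {}}"
    unfolding rl_def using assms by auto
  show "insert x (nbr E V x) \<subseteq> V" using assms unfolding nbr_def by auto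
qed (use assms sym_rl in auto)



lemma jp_bound:
  assumes G: "finite V" and AB: "A \<subseteq> V" "B \<subseteq> V" and conn: "pfun E B = 1"
  shows "jp E (A \<union> B) x \<le> jp E A x + 1"
proof -
  let ?T = "A \<union> B"
  let ?RT = "rl ?T {e \<in> E. e \<subseteq> ?T}"
  let ?RA = "rl A {e \<in> E. e \<subseteq> A}"
  let ?RB = "rl B {e \<in> E. e \<subseteq> B}"
  have finT: "finite ?T" using AB G finite_subset by blast
  have finA: "finite A" using AB G finite_subset by blast
  have symT: "sym ?RT" by (rule sym_rl)
  have RTs: "?RT \<subseteq> ?T \<times> ?T" by (rule rl_sub)
  let ?P = "{C \<in> ?T // ?RT\<^sup>*. C \<inter> nbr E ?T x \<noteq> {}}"
  let ?P1 = "{C \<in> ?T // ?RT\<^sup>*. C \<inter> B \<noteq> {}}"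
  let ?P2 = "{C \<in> A // ?RA\<^sup>*. C \<inter> nbr E A x \<noteq> {}}"
  have finQ: "finite (?T // ?RT\<^sup>*)" using finT by (simp add: quot_img)
  have finP1: "finite ?P1" using finQ by simp
  have finP2: "finite ?P2" using finA by (simp add: quot_img)
  have Bcon: "(b1, b2) \<in> ?RT\<^sup>*" if "b1 \<in> B" "b2 \<in> B" for b1 b2
  proof -
    have "card (B // ?RB\<^sup>*) = 1" using conn unfolding pfun_def ncomp_rl by simp
    then obtain C0 where C0: "B // ?RB\<^sup>* = {C0}" by (meson card_1_singletonE)
    have q1: "?RB\<^sup>* `` {b1} \<in> B // ?RB\<^sup>*" using that(1) by (rule quotientI)
    have q2: "?RB\<^sup>* `` {b2} \<in> B // ?RB\<^sup>*" using that(2) by (rule quotientI)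
    have "?RB\<^sup>* `` {b1} = ?RB\<^sup>* `` {b2}" using q1 q2 unfolding C0 by simp
    moreover have "b2 \<in> ?RB\<^sup>* `` {b2}" by simp
    ultimately have "b2 \<in> ?RB\<^sup>* `` {b1}" by simp
    then have "(b1, b2) \<in> ?RB\<^sup>*" by simp
    moreover have "?RB \<subseteq> ?RT" unfolding rl_def by auto
    ultimately show ?thesis using rtrancl_mono by (metis subsetD)
  qed
  have cP1: "card ?P1 \<le> 1"
  proof -
    have "C1 = C2" if "C1 \<in> ?P1" "C2 \<in> ?P1" for C1 C2
    proof -
      have h1: "C1 \<in> ?T // ?RT\<^sup>*" "C1 \<inter> B \<noteq> {}" using that(1) by auto
      obtain u1 where "C1 = ?RT\<^sup>* `` {u1}" using h1(1) by (rule quotientE) simp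
      moreover obtain b1 where "b1 \<in> C1" "b1 \<in> B" using h1(2) by blast
      ultimately have u1: "C1 = ?RT\<^sup>* `` {u1}" "b1 \<in> C1" "b1 \<in> B" by simp_all
      have h2: "C2 \<in> ?T // ?RT\<^sup>*" "C2 \<inter> B \<noteq> {}" using that(2) by auto
      obtain u2 where "C2 = ?RT\<^sup>* `` {u2}" using h2(1) by (rule quotientE) simp
      moreover obtain b2 where "b2 \<in> C2" "b2 \<in> B" using h2(2) by blast
      ultimately have u2: "C2 = ?RT\<^sup>* `` {u2}" "b2 \<in> C2" "b2 \<in> B" by simp_all
      have "C1 = ?RT\<^sup>* `` {b1}" using u1 class_eq[OF symT] by auto
      also have "\<dots> = ?RT\<^sup>* `` {b2}" using class_eq[OF symT Bcon[OF u1(3) u2(3)]] .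
      also have "\<dots> = C2" using u2 class_eq[OF symT] by auto
      finally show ?thesis .
    qed
    then show ?thesis using finP1 by (simp add: card_le_Suc0_iff_eq)
  qed
  have sub2: "?P - ?P1 \<subseteq> ?P2"
  proof
    fix C assume C: "C \<in> ?P - ?P1"
    then obtain u where u: "u \<in> ?T" "C = ?RT\<^sup>* `` {u}" by (auto elim!: quotientE)
    have CB: "C \<inter> B = {}" using C by auto
    have CT: "C \<subseteq> ?T" using u rtrancl_closed[OF RTs] by auto
    then have CA: "C \<subseteq> A" using CB by auto
    have uA: "u \<in> A" using u CA by auto
    have "(u, v) \<in> ?RA\<^sup>*" if "(u, v) \<in> ?RT\<^sup>*" for v
      using that
    proof (induction rule: rtrancl_induct)
      case base then show ?case by simp
    next
      case (step y z)
      have "y \<in> C" "z \<in> C" using step u by auto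
      then have "y \<in> A" "z \<in> A" using CA by auto
      then have "(y, z) \<in> ?RA" using step(2) unfolding rl_def by auto
      then show ?case using step(3) by simp
    qed
    moreover have "?RA \<subseteq> ?RT" unfolding rl_def by auto
    ultimately have "C = ?RA\<^sup>* `` {u}" using u rtrancl_mono by blast
    then have "C \<in> A // ?RA\<^sup>*" using uA by (auto intro: quotientI)
    moreover have "C \<inter> nbr E A x \<noteq> {}" using C CA unfolding nbr_def by auto
    ultimately show "C \<in> ?P2" by simp
  qed
  have "?P \<subseteq> ?P1 \<union> (?P - ?P1)" by auto
  then have "card ?P \<le> card (?P1 \<union> (?P - ?P1))" using finP1 finQ
    by (intro card_mono) auto
  also have "\<dots> \<le> card ?P1 + card (?P - ?P1)" by (rule card_Un_le)
  also have "\<dots> \<le> 1 + card ?P2" using cP1 card_mono[OF finP2 sub2] by simp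
  finally show ?thesis unfolding jp_def by simp
qed



lemma nbr_insert:
  "nbr E (insert x X) v = (if {v, x} \<in> E then insert x (nbr E X v) else nbr E X v)"
  unfolding nbr_def by auto

lemma WA_insert:
  assumes "finite X" "x \<notin> X"
  shows "WA E w (insert x X) v = WA E w X v + (if {v, x} \<in> E then w {v, x} else 0)"
proof -
  have fin: "finite (nbr E X v)" using assms(1) unfolding nbr_def by simp
  have nx: "x \<notin> nbr E X v" using assms(2) unfolding nbr_def by simp
  show ?thesis unfolding WA_def nbr_insert using fin nx by (simp add: add.commute)
qed

lemma WA_mono:
  assumes "finite T" "S \<subseteq> T" "\<forall>e\<in>E. w e > 0"
  shows "WA E w S v \<le> WA E w T v"
  unfolding WA_def
proof (rule sum_mono2)
  show "finite (nbr E T v)" using assms(1) unfolding nbr_def by simp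
  show "nbr E S v \<subseteq> nbr E T v" using assms(2) unfolding nbr_def by auto
  show "\<And>b. b \<in> nbr E T v - nbr E S v \<Longrightarrow> 0 \<le> w {v, b}"
    using assms(3) unfolding nbr_def by (auto intro: less_imp_le)
qed

lemma hv_alt:
  "hv V E w A v = (if v \<in> A then WA E w V v / 2 else min (WA E w A v) (WA E w V v / 2))"
  unfolding hv_def by auto

lemma hv_mono:
  assumes "finite T" "S \<subseteq> T" "\<forall>e\<in>E. w e > 0"
  shows "hv V E w S v \<le> hv V E w T v"
  using WA_mono[OF assms, of v] assms(2) unfolding hv_alt by auto

lemma hv_sub:
  assumes "finite T" "S \<subseteq> T" "\<forall>e\<in>E. w e > 0" "x \<notin> T"
  shows "hv V E w (insert x T) v - hv V E w T v \<le> hv V E w (insert x S) v - hv V E w S v"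
proof -
  have finS: "finite S" using assms(1,2) finite_subset by blast
  have le: "WA E w S v \<le> WA E w T v" by (rule WA_mono[OF assms(1-3)])
  define d where "d = (if {v, x} \<in> E then w {v, x} else 0)"
  have d: "d \<ge> 0" unfolding d_def using assms(3) by (auto intro: less_imp_le)
  have iT: "WA E w (insert x T) v = WA E w T v + d" unfolding d_def by (rule WA_insert) (use assms in auto)
  have iS: "WA E w (insert x S) v = WA E w S v + d" unfolding d_def by (rule WA_insert) (use assms finS in auto)
  have mS: "hv V E w S v \<le> hv V E w (insert x S) v" by (rule hv_mono) (use assms finS in auto)
  show ?thesis
  proof (cases "v = x")
    case True
    then show ?thesis using le assms(2,4) unfolding hv_alt by auto
  next
    case False
    show ?thesis
    proof (cases "v \<in> T")
      case True
      then show ?thesis using mS False unfolding hv_alt by auto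
    next
      case vT: False
      then have vS: "v \<notin> S" using assms(2) by auto
      show ?thesis using vT vS False iT iS le d unfolding hv_alt by (auto simp: min_def)
    qed
  qed
qed

lemma hfun_mono1:
  assumes "finite V" "S \<subseteq> V" "x \<in> V" "\<forall>e\<in>E. w e > 0"
  shows "hfun V E w S \<le> hfun V E w (insert x S)"
  unfolding hfun_def
  by (rule sum_mono, rule hv_mono) (use assms finite_subset in auto)

lemma hfun_sub:
  assumes "finite V" "S \<subseteq> T" "T \<subseteq> V" "x \<notin> T" "\<forall>e\<in>E. w e > 0"
  shows "hfun V E w (insert x T) - hfun V E w T \<le> hfun V E w (insert x S) - hfun V E w S"
  unfolding hfun_def sum_subtractf[symmetric]
  by (rule sum_mono, rule hv_sub) (use assms finite_subset in auto)



definition Nf :: "'a set \<Rightarrow> 'a set set \<Rightarrow> 'a set \<Rightarrow> rat" where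
  "Nf V E A = of_nat (card V) - of_nat (qfun V E A) - of_nat (pfun E A)"

lemma cfun_Nf: "cfun V E w A = Nf V E A / of_int (Lval V E w)"
  unfolding cfun_def Nf_def by simp

lemma Nf_step:
  assumes G: "finite V" "\<forall>e\<in>E. e \<subseteq> V \<and> card e = 2" and x: "x \<in> V" "x \<notin> S" and S: "S \<subseteq> V"
  shows "Nf V E (insert x S) - Nf V E S = (of_nat (kq V E S x) - 1) + (of_nat (jp E S x) - 1)"
proof -
  have q: "of_nat (qfun V E (insert x S)) + of_nat (kq V E S x) = (of_nat (qfun V E S) + 1 :: rat)"
    using q_step[OF G x] by (metis of_nat_add of_nat_1)
  have p: "of_nat (pfun E (insert x S)) + of_nat (jp E S x) = (of_nat (pfun E S) + 1 :: rat)"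
    using p_step[OF G x S] by (metis of_nat_add of_nat_1)
  show ?thesis unfolding Nf_def using q p by (simp add: algebra_simps)
qed

lemma Nf_mono1:
  assumes G: "finite V" "\<forall>e\<in>E. e \<subseteq> V \<and> card e = 2" "\<forall>v\<in>V. \<exists>e\<in>E. v \<in> e"
    and x: "x \<in> V" and S: "S \<subseteq> V"
  shows "Nf V E S \<le> Nf V E (insert x S)"
proof (cases "x \<in> S")
  case True then have "insert x S = S" by (rule insert_absorb)
  then show ?thesis by simp
next
  case False
  have st: "Nf V E (insert x S) - Nf V E S = (of_nat (kq V E S x) - 1) + (of_nat (jp E S x) - 1)"
    by (rule Nf_step) (use G x S False in auto)
  have k1: "kq V E S x \<ge> 1" by (rule kq_ge1[OF G(1) x])
  show ?thesis
  proof (cases "jp E S x = 0")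
    case True
    have iso: "\<exists>e\<in>E. x \<in> e" using G(3) x by blast
    have "kq V E S x \<ge> 2" by (rule kq_ge2[OF G(1,2) x False iso True S])
    then have "(of_nat (kq V E S x) :: rat) \<ge> 2" by simp
    then show ?thesis using st True by simp
  next
    case False
    then have "(of_nat (jp E S x) :: rat) \<ge> 1" by simp
    moreover have "(of_nat (kq V E S x) :: rat) \<ge> 1" using k1 by simp
    ultimately show ?thesis using st by simp
  qed
qed

lemma Nf_sub:
  assumes G: "finite V" "\<forall>e\<in>E. e \<subseteq> V \<and> card e = 2"
    and A: "A \<subseteq> V" and B: "B \<subseteq> V" and conn: "pfun E B = 1" and x: "x \<in> V" "x \<notin> A \<union> B"
  shows "Nf V E (insert x (A \<union> B)) - Nf V E (A \<union> B) \<le> Nf V E (insert x A) - Nf V E A + 1"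
proof -
  have s1: "Nf V E (insert x (A \<union> B)) - Nf V E (A \<union> B)
      = (of_nat (kq V E (A \<union> B) x) - 1) + (of_nat (jp E (A \<union> B) x) - 1)"
    by (rule Nf_step) (use G x A B in auto)
  have s2: "Nf V E (insert x A) - Nf V E A = (of_nat (kq V E A x) - 1) + (of_nat (jp E A x) - 1)"
    by (rule Nf_step) (use G x A B in auto)
  have "kq V E (A \<union> B) x \<le> kq V E A x" by (rule kq_mono) (use G x in auto)
  then have k: "(of_nat (kq V E (A \<union> B) x) :: rat) \<le> of_nat (kq V E A x)" by simp
  have "jp E (A \<union> B) x \<le> jp E A x + 1" by (rule jp_bound[OF G(1) A B conn])
  then have j: "(of_nat (jp E (A \<union> B) x) :: rat) \<le> of_nat (jp E A x) + 1"
    by (metis of_nat_1 of_nat_add of_nat_mono)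
  show ?thesis using s1 s2 k j by simp
qed

lemma Lval_nonneg:
  assumes "finite V" "V \<noteq> {}"
  shows "Lval V E w \<ge> 0"
proof -
  obtain v where v: "v \<in> V" using assms by auto
  have "lv V E w v \<le> Lval V E w" unfolding Lval_def using assms v by simp
  moreover have "lv V E w v \<ge> 0" unfolding lv_def by simp
  ultimately show ?thesis by simp
qed

lemma ffun_mono1:
  assumes G: "wgraph V E w" and x: "x \<in> V" and S: "S \<subseteq> V"
  shows "ffun V E w S \<le> ffun V E w (insert x S)"
proof -
  have G': "finite V" "\<forall>e\<in>E. e \<subseteq> V \<and> card e = 2" "\<forall>e\<in>E. w e > 0" "\<forall>v\<in>V. \<exists>e\<in>E. v \<in> e"
    using G unfolding wgraph_def by auto
  have L: "(of_int (Lval V E w) :: rat) \<ge> 0" using Lval_nonneg[OF G'(1)] x by auto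
  have "hfun V E w S \<le> hfun V E w (insert x S)" by (rule hfun_mono1) (use G' x S in auto)
  moreover have "Nf V E S \<le> Nf V E (insert x S)" by (rule Nf_mono1) (use G' x S in auto)
  then have "cfun V E w S \<le> cfun V E w (insert x S)" unfolding cfun_Nf using L
    by (rule divide_right_mono)
  ultimately show ?thesis unfolding ffun_def by simp
qed

lemma ffun_mono:
  assumes G: "wgraph V E w" and AB: "A \<subseteq> B" "B \<subseteq> V"
  shows "ffun V E w A \<le> ffun V E w B"
proof -
  have finV: "finite V" using G unfolding wgraph_def by auto
  have "finite (B - A)" using AB finV finite_subset by blast
  moreover have "B - A \<subseteq> V" using AB by auto
  ultimately have "ffun V E w A \<le> ffun V E w (A \<union> D)" if "D = B - A" for D
    using that
  proof -
    have "\<And>D. finite D \<Longrightarrow> D \<subseteq> V \<Longrightarrow> ffun V E w A \<le> ffun V E w (A \<union> D)"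
    proof -
      fix D :: "'a set" assume "finite D" "D \<subseteq> V"
      then show "ffun V E w A \<le> ffun V E w (A \<union> D)"
      proof (induction D rule: finite_induct)
        case empty then show ?case by simp
      next
        case (insert y F)
        have "ffun V E w (A \<union> F) \<le> ffun V E w (insert y (A \<union> F))"
          by (rule ffun_mono1) (use G AB insert in auto)
        then show ?case using insert by simp
      qed
    qed
    then show ?thesis using that \<open>finite (B - A)\<close> \<open>B - A \<subseteq> V\<close> by blast
  qed
  moreover have "A \<union> (B - A) = B" using AB by auto
  ultimately show ?thesis by metis
qed

theorem mainTheorem18:
  fixes V :: "'a set" and E :: "'a set set" and w :: "'a set \<Rightarrow> rat"
  assumes "wgraph V E w"
  shows "(\<forall>A B. A \<subseteq> B \<and> B \<subseteq> V \<longrightarrow> ffun V E w A \<le> ffun V E w B)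
    \<and> (\<forall>A B x. A \<subseteq> V \<and> B \<subseteq> V \<and> connected_set E B \<and> x \<in> V - B \<longrightarrow>
         ffun V E w (A \<union> B \<union> {x}) - ffun V E w (A \<union> B)
           \<le> ffun V E w (A \<union> {x}) - ffun V E w A + 1 / of_int (Lval V E w))"
proof (intro conjI allI impI)
  fix A B assume "A \<subseteq> B \<and> B \<subseteq> V"
  then show "ffun V E w A \<le> ffun V E w B" using ffun_mono[OF assms] by blast
next
  fix A B x assume H: "A \<subseteq> V \<and> B \<subseteq> V \<and> connected_set E B \<and> x \<in> V - B"
  have G': "finite V" "\<forall>e\<in>E. e \<subseteq> V \<and> card e = 2" "\<forall>e\<in>E. w e > 0"
    using assms unfolding wgraph_def by auto
  have A: "A \<subseteq> V" and B: "B \<subseteq> V" and conn: "pfun E B = 1" and x: "x \<in> V" "x \<notin> B"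
    using H unfolding connected_set_def by auto
  let ?L = "(of_int (Lval V E w) :: rat)"
  have L: "?L \<ge> 0" using Lval_nonneg[OF G'(1)] x by auto
  have L1: "1 / ?L \<ge> 0" using L by simp
  show "ffun V E w (A \<union> B \<union> {x}) - ffun V E w (A \<union> B)
           \<le> ffun V E w (A \<union> {x}) - ffun V E w A + 1 / ?L"
  proof (cases "x \<in> A")
    case True
    then have "A \<union> B \<union> {x} = A \<union> B" "A \<union> {x} = A" by auto
    then show ?thesis using L1 by simp
  next
    case False
    then have xT: "x \<notin> A \<union> B" using x by auto
    have h: "hfun V E w (insert x (A \<union> B)) - hfun V E w (A \<union> B)
        \<le> hfun V E w (insert x A) - hfun V E w A"
      by (rule hfun_sub) (use G' A B xT in auto)
    have n: "Nf V E (insert x (A \<union> B)) - Nf V E (A \<union> B) \<le> Nf V E (insert x A) - Nf V E A + 1"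
      by (rule Nf_sub[OF G'(1,2) A B conn x(1) xT])
    have "(Nf V E (insert x (A \<union> B)) - Nf V E (A \<union> B)) / ?L \<le> (Nf V E (insert x A) - Nf V E A + 1) / ?L"
      using n L by (rule divide_right_mono)
    then have c: "cfun V E w (insert x (A \<union> B)) - cfun V E w (A \<union> B)
        \<le> cfun V E w (insert x A) - cfun V E w A + 1 / ?L"
      unfolding cfun_Nf by (simp add: diff_divide_distrib add_divide_distrib)
    show ?thesis using h c unfolding ffun_def by simp
  qed
qed

end
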